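(* Let $\mu, \gamma > 0$ and $\epsilon \geq 0$, and let $\mathcal{S}^\epsilon_{\mu,\gamma}$ denote the class of all operators $H: L_2 \to L_2$ (over all dimensions $n$) that are $\epsilon$-strongly incrementally $(\mu,\gamma)$-dissipative. Then \[ \mathrm{SRG}(\mathcal{S}^\epsilon_{\mu,\gamma}) = \mathcal{D}_1 \cup \mathcal{D}_2, \] where $\mathcal{D}_1 = \{z \in \mathbb{C} : |z| \leq \mu\}$ and $\mathcal{D}_2 = \{z \in \mathbb{C} : |z| \leq \gamma,\ \Re z \geq \epsilon\}$. Moreover, the class $\mathcal{S}^\epsilon_{\mu,\gamma}$ is SRG-full, i.e. an operator $H$ belongs to $\mathcal{S}^\epsilon_{\mu,\gamma}$ if and only if $\mathrm{SRG}(H) \subseteq \mathcal{D}_1\cup\mathcal{D}_2$.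
   Context: $L_2 = L_2(\mathbb{R}^n)$ is the Hilbert space of square-integrable signals $u:\mathbb{R}_{\ge 0}\to\mathbb{R}^n$ with inner product $\langle u, y\rangle = \int_0^\infty u(t)^\top y(t)\,dt$ and induced norm $\|\cdot\|$. An operator $H$ on a Hilbert space $\mathcal{H}$ is a possibly multi-valued map, identified with its relation $\{(u,y) : y \in H(u)\}$. Definition: for $\mu,\gamma,\epsilon\ge 0$, $H:L_2\to L_2$ is $\epsilon$-strongly incrementally $(\mu,\gamma)$-dissipative if for all $u_1,u_2\in L_2$, $y_1\in H(u_1)$, $y_2\in H(u_2)$, either (i) $\|y_1-y_2\|\le \mu\|u_1-u_2\|$, or both (ii) $\langle u_1-u_2, y_1-y_2\rangle \ge \epsilon\|u_1-u_2\|^2$ and (iii) $\|y_1-y_2\|\le\gamma\|u_1-u_2\|$ hold (or all three hold). If $\epsilon=0$ it is called incrementally $(\mu,\gamma)$-dissipative. Scaled Relative Graph (SRG): for $u,y$ nonzero in a Hilbert space, $\angle(u,y) = \arccos\frac{\Re\langle u,y\rangle}{\|u\|\|y\|}\in[0,\pi]$. For $u_1\ne u_2$, $z_H(u_1,u_2) = \left\{\frac{\|y_1-y_2\|}{\|u_1-u_2\|}e^{\pm j\angle(u_1-u_2,\,y_1-y_2)} : y_1\in H(u_1), y_2\in H(u_2)\right\}$ (with the convention that the angle term is irrelevant when $y_1=y_2$, giving the point $0$). If $u_1=u_2$ and there exist $y_1\ne y_2$ in $H(u_1)$, then $z_H(u_1,u_1)=\{\infty\}$; otherwise it is empty. $\mathrm{SRG}(H)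 = \bigcup_{u_1,u_2} z_H(u_1,u_2)$, a subset of the extended complex plane. For a class $\mathcal{A}$ of operators, $\mathrm{SRG}(\mathcal{A}) = \bigcup_{H\in\mathcal{A}}\mathrm{SRG}(H)$. A class $\mathcal{A}$ is SRG-full if for every operator $H$: $H\in\mathcal{A} \iff \mathrm{SRG}(H)\subseteq \mathrm{SRG}(\mathcal{A})$. *)

theory Defs
  imports "HOL-Analysis.Analysis"
begin

text \<open>A representative of a signal u : R_{>=0} -> R^n is encoded as a function
  f :: real => nat => real, where f t i is the i-th component (i < n) at time t.
  For definiteness, representatives vanish for t < 0 and for components i >= n.\<close>

definition sig :: "nat \<Rightarrow> (real \<Rightarrow> nat \<Rightarrow> real) \<Rightarrow> bool" where
  "sig n f \<longleftrightarrow> (\<forall>t i. (t < 0 \<or> n \<le> i) \<longrightarrow> f t i = 0) \<and>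
     (\<forall>i<n. (\<lambda>t. f t i) \<in> borel_measurable lborel \<and> integrable lborel (\<lambda>t. (f t i)\<^sup>2))"

text \<open>Elements of L_2(R^n): equivalence classes of representatives modulo
  equality almost everywhere.\<close>

definition L2cls :: "nat \<Rightarrow> (real \<Rightarrow> nat \<Rightarrow> real) \<Rightarrow> (real \<Rightarrow> nat \<Rightarrow> real) set" where
  "L2cls n f = {g. sig n g \<and> (AE t in lborel. g t = f t)}"

definition L2 :: "nat \<Rightarrow> (real \<Rightarrow> nat \<Rightarrow> real) set set" where
  "L2 n = L2cls n ` {f. sig n f}"

definition rep :: "(real \<Rightarrow> nat \<Rightarrow> real) set \<Rightarrow> (real \<Rightarrow> nat \<Rightarrow> real)" where
  "rep c = (SOME f. f \<in> c)"

definition ip_diff :: "nat \<Rightarrow> (real \<Rightarrow> nat \<Rightarrow> real) set \<Rightarrow> (real \<Rightarrow> nat \<Rightarrow> real) set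
    \<Rightarrow> (real \<Rightarrow> nat \<Rightarrow> real) set \<Rightarrow> (real \<Rightarrow> nat \<Rightarrow> real) set \<Rightarrow> real" where
  "ip_diff n u v x y =
     (\<Sum>i<n. LINT t|lborel. (rep u t i - rep v t i) * (rep x t i - rep y t i))"

definition nrm_diff :: "nat \<Rightarrow> (real \<Rightarrow> nat \<Rightarrow> real) set \<Rightarrow> (real \<Rightarrow> nat \<Rightarrow> real) set \<Rightarrow> real" where
  "nrm_diff n u v = sqrt (ip_diff n u v u v)"

text \<open>An operator on L_2(R^n) is a (possibly multi-valued) map, identified with its
  relation; y \<in> H(u) iff (u, y) \<in> H.\<close>

definition is_op :: "nat \<Rightarrow> ((real \<Rightarrow> nat \<Rightarrow> real) set \<times> (real \<Rightarrow> nat \<Rightarrow> real) set) set \<Rightarrow> bool" where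
  "is_op n H \<longleftrightarrow> H \<subseteq> L2 n \<times> L2 n"

definition strongly_incr_dissipative ::
  "nat \<Rightarrow> real \<Rightarrow> real \<Rightarrow> real \<Rightarrow> ((real \<Rightarrow> nat \<Rightarrow> real) set \<times> (real \<Rightarrow> nat \<Rightarrow> real) set) set \<Rightarrow> bool" where
  "strongly_incr_dissipative n \<epsilon> \<mu> \<gamma> H \<longleftrightarrow>
     (\<forall>u1 y1 u2 y2. (u1, y1) \<in> H \<longrightarrow> (u2, y2) \<in> H \<longrightarrow>
        nrm_diff n y1 y2 \<le> \<mu> * nrm_diff n u1 u2 \<or>
        (ip_diff n u1 u2 y1 y2 \<ge> \<epsilon> * (nrm_diff n u1 u2)\<^sup>2 \<and>
         nrm_diff n y1 y2 \<le> \<gamma> * nrm_diff n u1 u2))"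

definition S_class :: "nat \<Rightarrow> real \<Rightarrow> real \<Rightarrow> real
    \<Rightarrow> ((real \<Rightarrow> nat \<Rightarrow> real) set \<times> (real \<Rightarrow> nat \<Rightarrow> real) set) set set" where
  "S_class n \<epsilon> \<mu> \<gamma> = {H. is_op n H \<and> strongly_incr_dissipative n \<epsilon> \<mu> \<gamma> H}"

text \<open>Extended complex plane: None represents the point infinity.\<close>

definition angle_diff :: "nat \<Rightarrow> (real \<Rightarrow> nat \<Rightarrow> real) set \<Rightarrow> (real \<Rightarrow> nat \<Rightarrow> real) set
    \<Rightarrow> (real \<Rightarrow> nat \<Rightarrow> real) set \<Rightarrow> (real \<Rightarrow> nat \<Rightarrow> real) set \<Rightarrow> real" where
  "angle_diff n u1 u2 y1 y2 =
     arccos (ip_diff n u1 u2 y1 y2 / (nrm_diff n u1 u2 * nrm_diff n y1 y2))"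

definition zH :: "nat \<Rightarrow> ((real \<Rightarrow> nat \<Rightarrow> real) set \<times> (real \<Rightarrow> nat \<Rightarrow> real) set) set
    \<Rightarrow> (real \<Rightarrow> nat \<Rightarrow> real) set \<Rightarrow> (real \<Rightarrow> nat \<Rightarrow> real) set \<Rightarrow> complex option set" where
  "zH n H u1 u2 =
     (if u1 \<noteq> u2 then
        {Some (if y1 = y2 then 0
               else complex_of_real (nrm_diff n y1 y2 / nrm_diff n u1 u2)
                      * cis (s * angle_diff n u1 u2 y1 y2)) |
           y1 y2 s. (u1, y1) \<in> H \<and> (u2, y2) \<in> H \<and> s \<in> {1, -1}}
      else if (\<exists>y1 y2. (u1, y1) \<in> H \<and> (u1, y2) \<in> H \<and> y1 \<noteq> y2) then {None}
      else {})"

definition SRG :: "nat \<Rightarrow> ((real \<Rightarrow> nat \<Rightarrow> real) set \<times> (real \<Rightarrow> nat \<Rightarrow> real) set) set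
    \<Rightarrow> complex option set" where
  "SRG n H = (\<Union>u1\<in>L2 n. \<Union>u2\<in>L2 n. zH n H u1 u2)"

definition SRG_S :: "real \<Rightarrow> real \<Rightarrow> real \<Rightarrow> complex option set" where
  "SRG_S \<epsilon> \<mu> \<gamma> = (\<Union>n\<in>{1..}. \<Union>H\<in>S_class n \<epsilon> \<mu> \<gamma>. SRG n H)"

definition D1 :: "real \<Rightarrow> complex set" where
  "D1 \<mu> = {z. cmod z \<le> \<mu>}"

definition D2 :: "real \<Rightarrow> real \<Rightarrow> complex set" where
  "D2 \<epsilon> \<gamma> = {z. cmod z \<le> \<gamma> \<and> Re z \<ge> \<epsilon>}"

end

theory Submission
  imports Defs
begin


definition dd :: "(real \<Rightarrow> nat \<Rightarrow> real) \<Rightarrow> (real \<Rightarrow> nat \<Rightarrow> real) \<Rightarrow> (real \<Rightarrow> nat \<Rightarrow> real)" where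
  "dd f g = (\<lambda>t i. f t i - g t i)"

definition sqi :: "nat \<Rightarrow> (real \<Rightarrow> nat \<Rightarrow> real) \<Rightarrow> bool" where
  "sqi n a \<longleftrightarrow> (\<forall>i<n. (\<lambda>t. a t i) \<in> borel_measurable lborel \<and> integrable lborel (\<lambda>t. (a t i)\<^sup>2))"

definition PP :: "nat \<Rightarrow> (real \<Rightarrow> nat \<Rightarrow> real) \<Rightarrow> (real \<Rightarrow> nat \<Rightarrow> real) \<Rightarrow> real" where
  "PP n a b = (\<Sum>i<n. LINT t|lborel. a t i * b t i)"

lemma ip_PP: "ip_diff n u v x y = PP n (dd (rep u) (rep v)) (dd (rep x) (rep y))"
  unfolding ip_diff_def PP_def dd_def by simp

lemma prod_int:
  assumes "sqi n a" "sqi n b" "i < n"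
  shows "integrable lborel (\<lambda>t. a t i * b t i)"
proof (rule Bochner_Integration.integrable_bound[where f="\<lambda>t. (a t i)\<^sup>2 + (b t i)\<^sup>2"])
  show "integrable lborel (\<lambda>t. (a t i)\<^sup>2 + (b t i)\<^sup>2)"
    using assms unfolding sqi_def by auto
  show "(\<lambda>t. a t i * b t i) \<in> borel_measurable lborel"
    by (rule borel_measurable_times) (use assms in \<open>auto simp: sqi_def\<close>)
  show "AE t in lborel. norm (a t i * b t i) \<le> norm ((a t i)\<^sup>2 + (b t i)\<^sup>2)"
  proof (rule AE_I2)
    fix t
    have "0 \<le> (\<bar>a t i\<bar> - \<bar>b t i\<bar>)\<^sup>2" by simp
    then have "2 * \<bar>a t i * b t i\<bar> \<le> (a t i)\<^sup>2 + (b t i)\<^sup>2"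
      by (simp add: power2_diff abs_mult)
    moreover have "0 \<le> (a t i)\<^sup>2 + (b t i)\<^sup>2" by simp
    ultimately show "norm (a t i * b t i) \<le> norm ((a t i)\<^sup>2 + (b t i)\<^sup>2)" by simp
  qed
qed

lemma sqi_dd: assumes "sqi n a" "sqi n b" shows "sqi n (dd a b)"
  unfolding sqi_def
proof (intro allI impI conjI)
  fix i assume i: "i < n"
  show "(\<lambda>t. dd a b t i) \<in> borel_measurable lborel"
    unfolding dd_def by (rule borel_measurable_diff) (use assms i in \<open>auto simp: sqi_def\<close>)
  have e: "(\<lambda>t. (dd a b t i)\<^sup>2) = (\<lambda>t. (a t i)\<^sup>2 - 2 * (a t i * b t i) + (b t i)\<^sup>2)"
    unfolding dd_def by (simp add: power2_eq_square algebra_simps)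
  show "integrable lborel (\<lambda>t. (dd a b t i)\<^sup>2)"
    unfolding e using assms i prod_int[OF assms i] unfolding sqi_def by auto
qed

lemma sig_sqi: "sig n f \<Longrightarrow> sqi n f"
  unfolding sig_def sqi_def by auto

lemma PP_nonneg: "PP n a a \<ge> 0"
  unfolding PP_def by (intro sum_nonneg integral_nonneg_AE) auto

lemma PP_expand:
  assumes "sqi n a" "sqi n b"
  shows "PP n (\<lambda>t i. a t i + l * b t i) (\<lambda>t i. a t i + l * b t i)
     = PP n a a + 2 * l * PP n a b + l\<^sup>2 * PP n b b"
proof -
  have "\<And>i. i < n \<Longrightarrow> (LINT t|lborel. (a t i + l * b t i) * (a t i + l * b t i))
     = (LINT t|lborel. a t i * a t i) + 2 * l * (LINT t|lborel. a t i * b t i) + l\<^sup>2 * (LINT t|lborel. b t i * b t i)"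
  proof -
    fix i assume i: "i < n"
    note I = prod_int[OF assms(1) assms(1) i] prod_int[OF assms(1) assms(2) i] prod_int[OF assms(2) assms(2) i]
    have "(\<lambda>t. (a t i + l * b t i) * (a t i + l * b t i)) =
       (\<lambda>t. a t i * a t i + (2 * l) * (a t i * b t i) + l\<^sup>2 * (b t i * b t i))"
      by (auto simp: algebra_simps power2_eq_square)
    then show "?thesis i" using I by simp
  qed
  then show ?thesis unfolding PP_def
    by (simp add: sum.distrib sum_distrib_left)
qed

lemma quad_disc:
  fixes A B C :: real
  assumes "A \<ge> 0" "B \<ge> 0" "\<And>l. A + 2 * l * C + l\<^sup>2 * B \<ge> 0"
  shows "C\<^sup>2 \<le> A * B"
proof (cases "B = 0")
  case True
  have "C = 0"
  proof (rule ccontr)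
    assume "C \<noteq> 0"
    have "A + 2 * (-(A+1)/(2*C)) * C + (-(A+1)/(2*C))\<^sup>2 * B \<ge> 0" by (rule assms(3))
    with True \<open>C \<noteq> 0\<close> show False by (simp add: field_simps)
  qed
  then show ?thesis using True by simp
next
  case False
  then have Bp: "B > 0" using assms(2) by simp
  have "A + 2 * (-C/B) * C + (-C/B)\<^sup>2 * B \<ge> 0" by (rule assms(3))
  then have "A - C\<^sup>2 / B \<ge> 0" using Bp by (simp add: field_simps power2_eq_square)
  then show ?thesis using Bp by (simp add: field_simps)
qed

lemma PP_CS:
  assumes "sqi n a" "sqi n b"
  shows "(PP n a b)\<^sup>2 \<le> PP n a a * PP n b b"
proof (rule quad_disc)
  show "0 \<le> PP n a a" "0 \<le> PP n b b" by (rule PP_nonneg)+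
  fix l 
  have "0 \<le> PP n (\<lambda>t i. a t i + l * b t i) (\<lambda>t i. a t i + l * b t i)" by (rule PP_nonneg)
  then show "0 \<le> PP n a a + 2 * l * PP n a b + l\<^sup>2 * PP n b b"
    unfolding PP_expand[OF assms, of l] .
qed

lemma PP_zero:
  assumes "sqi n a" "PP n a a = 0" "i < n"
  shows "AE t in lborel. a t i = 0"
proof -
  have "(\<Sum>i<n. LINT t|lborel. a t i * a t i) = 0" using assms(2) unfolding PP_def .
  moreover have "\<And>i. i \<in> {..<n} \<Longrightarrow> 0 \<le> (LINT t|lborel. a t i * a t i)"
    by (rule integral_nonneg_AE) auto
  ultimately have "\<forall>i\<in>{..<n}. (LINT t|lborel. a t i * a t i) = 0"
    using sum_nonneg_eq_0_iff[of "{..<n}" "\<lambda>i. LINT t|lborel. a t i * a t i"] by simp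
  then have "(LINT t|lborel. a t i * a t i) = 0" using assms(3) by auto
  then have "AE t in lborel. a t i * a t i = 0"
    using integral_nonneg_eq_0_iff_AE[OF prod_int[OF assms(1) assms(1) assms(3)]] by auto
  then show ?thesis by auto
qed



lemma self_cls: "sig n f \<Longrightarrow> f \<in> L2cls n f"
  unfolding L2cls_def by auto

lemma rep_cls: assumes "sig n f" shows "rep (L2cls n f) \<in> L2cls n f"
proof -
  have "f \<in> L2cls n f" using self_cls[OF assms] .
  then show ?thesis unfolding rep_def by (rule someI[where P="\<lambda>g. g \<in> L2cls n f"])
qed

lemma cls_eq:
  assumes "sig n f" "sig n g" "AE t in lborel. f t = g t"
  shows "L2cls n f = L2cls n g"
proof -
  have "AE t in lborel. h t = g t" if "AE t in lborel. h t = f t" for h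
    using that assms(3) by eventually_elim simp
  moreover have "AE t in lborel. h t = f t" if "AE t in lborel. h t = g t" for h
    using that assms(3) by eventually_elim simp
  ultimately show ?thesis unfolding L2cls_def by blast
qed

lemma L2_mem:
  assumes "u \<in> L2 n"
  shows "sig n (rep u) \<and> u = L2cls n (rep u)"
proof -
  obtain f where f: "sig n f" "u = L2cls n f" using assms unfolding L2_def by auto
  have r: "rep u \<in> L2cls n f" using rep_cls[OF f(1)] f(2) by simp
  then have s: "sig n (rep u)" and ae: "AE t in lborel. rep u t = f t" unfolding L2cls_def by auto
  show ?thesis using cls_eq[OF s f(1) ae] f(2) s by simp
qed

lemma sig_L2: "sig n f \<Longrightarrow> L2cls n f \<in> L2 n"
  unfolding L2_def by auto

lemma ip_self1: "ip_diff n u u x y = 0"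
  unfolding ip_diff_def by simp

lemma ip_self2: "ip_diff n u v x x = 0"
  unfolding ip_diff_def by simp

lemma nrm_self: "nrm_diff n u u = 0"
  unfolding nrm_diff_def ip_diff_def by simp

lemma ip_sym: "ip_diff n u2 u1 y2 y1 = ip_diff n u1 u2 y1 y2"
  unfolding ip_diff_def by (rule sum.cong) (auto simp: algebra_simps)

lemma ip_sym2: "ip_diff n u1 u2 y1 y2 = ip_diff n y1 y2 u1 u2"
  unfolding ip_diff_def by (rule sum.cong) (auto simp: algebra_simps)

lemma nrm_sym: "nrm_diff n u2 u1 = nrm_diff n u1 u2"
  unfolding nrm_diff_def by (subst ip_sym) (rule refl)

lemma sqi_L2: "u \<in> L2 n \<Longrightarrow> v \<in> L2 n \<Longrightarrow> sqi n (dd (rep u) (rep v))"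
  using L2_mem[of u n] L2_mem[of v n] by (intro sqi_dd sig_sqi) auto

lemma ip_nonneg: "ip_diff n u v u v \<ge> 0"
  unfolding ip_PP by (rule PP_nonneg)

lemma nrm_sq: "(nrm_diff n u v)\<^sup>2 = ip_diff n u v u v"
  unfolding nrm_diff_def using ip_nonneg by simp

lemma ip_CS:
  assumes "u1 \<in> L2 n" "u2 \<in> L2 n" "y1 \<in> L2 n" "y2 \<in> L2 n"
  shows "(ip_diff n u1 u2 y1 y2)\<^sup>2 \<le> ip_diff n u1 u2 u1 u2 * ip_diff n y1 y2 y1 y2"
  unfolding ip_PP by (rule PP_CS) (use assms sqi_L2 in auto)

lemma ip_pos:
  assumes "u1 \<in> L2 n" "u2 \<in> L2 n" "u1 \<noteq> u2"
  shows "ip_diff n u1 u2 u1 u2 > 0"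
proof (rule ccontr)
  assume "\<not> ?thesis"
  then have z: "PP n (dd (rep u1) (rep u2)) (dd (rep u1) (rep u2)) = 0"
    using ip_nonneg[of n u1 u2] unfolding ip_PP by simp
  have m1: "sig n (rep u1)" "u1 = L2cls n (rep u1)" using L2_mem[OF assms(1)] by auto
  have m2: "sig n (rep u2)" "u2 = L2cls n (rep u2)" using L2_mem[OF assms(2)] by auto
  have "\<forall>i. AE t in lborel. rep u1 t i = rep u2 t i"
  proof
    fix i show "AE t in lborel. rep u1 t i = rep u2 t i"
    proof (cases "i < n")
      case True
      have "AE t in lborel. dd (rep u1) (rep u2) t i = 0"
        by (rule PP_zero[OF sqi_L2[OF assms(1,2)] z True])
      then show ?thesis by eventually_elim (simp add: dd_def)
    next
      case False
      then show ?thesis using m1(1) m2(1) unfolding sig_def by auto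
    qed
  qed
  then have "AE t in lborel. \<forall>i. rep u1 t i = rep u2 t i"
    by (subst AE_all_countable) 
  then have "AE t in lborel. rep u1 t = rep u2 t" by eventually_elim auto
  then have "u1 = u2" using cls_eq[OF m1(1) m2(1)] m1(2) m2(2) by simp
  with assms(3) show False by simp
qed

lemma nrm_pos:
  assumes "u1 \<in> L2 n" "u2 \<in> L2 n" "u1 \<noteq> u2"
  shows "nrm_diff n u1 u2 > 0"
  unfolding nrm_diff_def using ip_pos[OF assms] by simp

definition cond :: "nat \<Rightarrow> real \<Rightarrow> real \<Rightarrow> real \<Rightarrow> _" where
  "cond n \<epsilon> \<mu> \<gamma> u1 u2 y1 y2 \<longleftrightarrow>
        nrm_diff n y1 y2 \<le> \<mu> * nrm_diff n u1 u2 \<or>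
        (ip_diff n u1 u2 y1 y2 \<ge> \<epsilon> * (nrm_diff n u1 u2)\<^sup>2 \<and>
         nrm_diff n y1 y2 \<le> \<gamma> * nrm_diff n u1 u2)"

lemma sid_cond: "strongly_incr_dissipative n \<epsilon> \<mu> \<gamma> H \<longleftrightarrow>
   (\<forall>u1 y1 u2 y2. (u1, y1) \<in> H \<longrightarrow> (u2, y2) \<in> H \<longrightarrow> cond n \<epsilon> \<mu> \<gamma> u1 u2 y1 y2)"
  unfolding strongly_incr_dissipative_def cond_def by simp

lemma cond_sym: "cond n \<epsilon> \<mu> \<gamma> u2 u1 y2 y1 \<longleftrightarrow> cond n \<epsilon> \<mu> \<gamma> u1 u2 y1 y2"
  unfolding cond_def by (simp only: nrm_sym[of n y2 y1] nrm_sym[of n u2 u1] ip_sym[of n u2 u1 y2 y1])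

lemma cond_same:
  assumes "y1 \<in> L2 n" "y2 \<in> L2 n"
  shows "cond n \<epsilon> \<mu> \<gamma> u u y1 y2 \<longleftrightarrow> y1 = y2"
proof
  assume "cond n \<epsilon> \<mu> \<gamma> u u y1 y2"
  then have "nrm_diff n y1 y2 \<le> 0" unfolding cond_def nrm_self by auto
  then show "y1 = y2" using nrm_pos[OF assms] by force
next
  assume "y1 = y2" then show "cond n \<epsilon> \<mu> \<gamma> u u y1 y2"
    unfolding cond_def by (simp add: nrm_self ip_self1)
qed

definition zval where
  "zval n u1 u2 y1 y2 s = (if y1 = y2 then 0
               else complex_of_real (nrm_diff n y1 y2 / nrm_diff n u1 u2)
                      * cis (s * angle_diff n u1 u2 y1 y2))"

lemma pair_equiv:
  assumes L: "u1 \<in> L2 n" "u2 \<in> L2 n" "y1 \<in> L2 n" "y2 \<in> L2 n" and mu: "\<mu> > 0"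
    and ne: "u1 \<noteq> u2" and s: "s \<in> {1, -1}"
  shows "cond n \<epsilon> \<mu> \<gamma> u1 u2 y1 y2 \<longleftrightarrow> zval n u1 u2 y1 y2 s \<in> D1 \<mu> \<union> D2 \<epsilon> \<gamma>"
proof (cases "y1 = y2")
  case True
  have a: "nrm_diff n u1 u2 > 0" using nrm_pos[OF L(1,2) ne] .
  show ?thesis using True a mu
    unfolding cond_def zval_def D1_def by (simp add: nrm_self ip_self2)
next
  case False
  define a where "a = nrm_diff n u1 u2"
  define b where "b = nrm_diff n y1 y2"
  define c where "c = ip_diff n u1 u2 y1 y2"
  have a: "a > 0" using nrm_pos[OF L(1,2) ne] a_def by simp
  have b: "b > 0" using nrm_pos[OF L(3,4) False] b_def by simp
  have cs: "c\<^sup>2 \<le> (a * b)\<^sup>2"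
    using ip_CS[OF L] unfolding a_def b_def c_def power_mult_distrib nrm_sq .
  then have "\<bar>c\<bar> \<le> a * b" using a b
    by (metis abs_le_square_iff abs_of_pos mult_pos_pos)
  then have r: "-1 \<le> c / (a*b)" "c / (a*b) \<le> 1" using a b
    by (auto simp: divide_le_eq le_divide_eq abs_le_iff)
  have ang: "angle_diff n u1 u2 y1 y2 = arccos (c / (a*b))"
    unfolding angle_diff_def a_def b_def c_def ..
  define z where "z = zval n u1 u2 y1 y2 s"
  have z: "z = complex_of_real (b / a) * cis (s * arccos (c / (a*b)))"
    unfolding z_def zval_def using False ang a_def b_def by simp
  have cmodz: "cmod z = b / a" unfolding z norm_mult norm_of_real using a b by simp
  have cs_s: "cos (s * arccos (c / (a*b))) = c / (a*b)" using s r by auto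
  have rez: "Re z = c / a\<^sup>2" unfolding z using cs_s a b
    by (simp add: power2_eq_square field_simps)
  have e1: "b \<le> \<mu> * a \<longleftrightarrow> b / a \<le> \<mu>" using a by (simp add: divide_le_eq mult.commute)
  have e2: "b \<le> \<gamma> * a \<longleftrightarrow> b / a \<le> \<gamma>" using a by (simp add: divide_le_eq mult.commute)
  have e3: "\<epsilon> * a\<^sup>2 \<le> c \<longleftrightarrow> \<epsilon> \<le> c / a\<^sup>2" using a by (simp add: le_divide_eq)
  show ?thesis
    unfolding z_def[symmetric] cond_def a_def[symmetric] b_def[symmetric] c_def[symmetric]
      D1_def D2_def using e1 e2 e3 cmodz rez by auto
qed



lemma zH_ne: "u1 \<noteq> u2 \<Longrightarrow> w \<in> zH n H u1 u2 \<longleftrightarrow>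
   (\<exists>y1 y2 s. w = Some (zval n u1 u2 y1 y2 s) \<and> (u1,y1) \<in> H \<and> (u2,y2) \<in> H \<and> s \<in> {1,-1})"
  unfolding zH_def zval_def by simp

lemma SRG_sub:
  assumes "H \<in> S_class n \<epsilon> \<mu> \<gamma>" "\<mu> > 0"
  shows "SRG n H \<subseteq> Some ` (D1 \<mu> \<union> D2 \<epsilon> \<gamma>)"
proof
  fix w assume "w \<in> SRG n H"
  then obtain u1 u2 where u: "u1 \<in> L2 n" "u2 \<in> L2 n" and w: "w \<in> zH n H u1 u2"
    unfolding SRG_def by auto
  have op: "H \<subseteq> L2 n \<times> L2 n" using assms(1) unfolding S_class_def is_op_def by auto
  have sid: "\<And>u1 y1 u2 y2. (u1, y1) \<in> H \<Longrightarrow> (u2, y2) \<in> H \<Longrightarrow> cond n \<epsilon> \<mu> \<gamma> u1 u2 y1 y2"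
    using assms(1) unfolding S_class_def sid_cond by auto
  show "w \<in> Some ` (D1 \<mu> \<union> D2 \<epsilon> \<gamma>)"
  proof (cases "u1 = u2")
    case False
    then obtain y1 y2 s where ws: "w = Some (zval n u1 u2 y1 y2 s)" "(u1,y1) \<in> H" "(u2,y2) \<in> H" "s \<in> {1,-1}"
      using w zH_ne[OF False] by blast
    have yL: "y1 \<in> L2 n" "y2 \<in> L2 n" using ws op by auto
    have "zval n u1 u2 y1 y2 s \<in> D1 \<mu> \<union> D2 \<epsilon> \<gamma>"
      using pair_equiv[OF u yL assms(2) False ws(4), of \<epsilon> \<gamma>] sid[OF ws(2,3)] by simp
    then show ?thesis using ws(1) by simp
  next
    case True
    then obtain y1 y2 where yy: "(u1, y1) \<in> H" "(u1, y2) \<in> H" "y1 \<noteq> y2"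
      using w unfolding zH_def by (auto split: if_splits)
    have yL: "y1 \<in> L2 n" "y2 \<in> L2 n" using yy op by auto
    have "y1 = y2" using cond_same[OF yL] sid[OF yy(1,2)] by simp
    with yy(3) show ?thesis by simp
  qed
qed

lemma SRG_full:
  assumes "is_op n H" "SRG n H \<subseteq> Some ` (D1 \<mu> \<union> D2 \<epsilon> \<gamma>)" "\<mu> > 0"
  shows "H \<in> S_class n \<epsilon> \<mu> \<gamma>"
  unfolding S_class_def sid_cond
proof (intro CollectI conjI assms(1) allI impI)
  fix u1 y1 u2 y2 assume h: "(u1, y1) \<in> H" "(u2, y2) \<in> H"
  have op: "H \<subseteq> L2 n \<times> L2 n" using assms(1) unfolding is_op_def by auto
  have L: "u1 \<in> L2 n" "u2 \<in> L2 n" "y1 \<in> L2 n" "y2 \<in> L2 n" using h op by auto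
  show "cond n \<epsilon> \<mu> \<gamma> u1 u2 y1 y2"
  proof (cases "u1 = u2")
    case True
    have "y1 = y2"
    proof (rule ccontr)
      assume "y1 \<noteq> y2"
      then have "zH n H u1 u2 = {None}" using True h unfolding zH_def by auto
      then have "None \<in> SRG n H" using L(1,2) unfolding SRG_def by blast
      with assms(2) show False by auto
    qed
    then show ?thesis using True cond_same[OF L(3,4)] by simp
  next
    case False
    have "Some (zval n u1 u2 y1 y2 1) \<in> zH n H u1 u2"
      using zH_ne[OF False] h by blast
    then have "Some (zval n u1 u2 y1 y2 1) \<in> SRG n H" using L(1,2) unfolding SRG_def by blast
    with assms(2) have "zval n u1 u2 y1 y2 1 \<in> D1 \<mu> \<union> D2 \<epsilon> \<gamma>" by auto
    then show ?thesis using pair_equiv[OF L assms(3) False, of 1] by simp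
  qed
qed



definition hh :: "real \<Rightarrow> real \<Rightarrow> real \<Rightarrow> real" where
  "hh c1 c2 t = c1 * indicator {0..<1} t + c2 * indicator {1..<2} t"

definition FF :: "real \<Rightarrow> real \<Rightarrow> real \<Rightarrow> nat \<Rightarrow> real" where
  "FF c1 c2 = (\<lambda>t i. if i = 0 then hh c1 c2 t else 0)"

lemma hh_mult: "hh c1 c2 t * hh d1 d2 t = hh (c1 * d1) (c2 * d2) t"
  unfolding hh_def by (auto simp: indicator_def)

lemma hh_diff: "hh c1 c2 t - hh d1 d2 t = hh (c1 - d1) (c2 - d2) t"
  unfolding hh_def by (simp add: algebra_simps)

lemma hh_meas: "hh c1 c2 \<in> borel_measurable lborel"
  unfolding hh_def[abs_def] by measurable

lemma hh_int: "integrable lborel (hh c1 c2)"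
  unfolding hh_def[abs_def]
  by (intro Bochner_Integration.integrable_add Bochner_Integration.integrable_mult_right integrable_real_indicator) auto

lemma hh_integral: "(LINT t|lborel. hh c1 c2 t) = c1 + c2"
proof -
  have i1: "integrable lborel (indicator {0..<1::real} :: real \<Rightarrow> real)" by auto
  have i2: "integrable lborel (indicator {1..<2::real} :: real \<Rightarrow> real)" by auto
  show ?thesis unfolding hh_def using i1 i2 by simp
qed

lemma FF_sig: "sig 1 (FF c1 c2)"
  unfolding sig_def FF_def
  using hh_meas hh_int[of "c1*c1" "c2*c2"]
  by (auto simp: hh_def power2_eq_square hh_mult[unfolded hh_def])

lemma PP_FF: "PP 1 (dd (FF a b) (FF c d)) (dd (FF a' b') (FF c' d'))
    = (a - c) * (a' - c') + (b - d) * (b' - d')"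
  unfolding PP_def dd_def FF_def by (simp add: hh_diff hh_mult hh_integral)

lemma ip_cls:
  assumes "sig n f1" "sig n f2" "sig n g1" "sig n g2"
  shows "ip_diff n (L2cls n f1) (L2cls n f2) (L2cls n g1) (L2cls n g2) = PP n (dd f1 f2) (dd g1 g2)"
  unfolding ip_PP PP_def
proof (rule sum.cong[OF refl])
  fix i assume i: "i \<in> {..<n}"
  have ae: "AE t in lborel. rep (L2cls n f) t = f t" if "sig n f" for f
    using rep_cls[OF that] unfolding L2cls_def by auto
  have s: "sig n (rep (L2cls n f))" if "sig n f" for f
    using rep_cls[OF that] unfolding L2cls_def by auto
  have m: "(\<lambda>t. f t i) \<in> borel_measurable lborel" if "sig n f" for f
    using that i unfolding sig_def by auto
  show "(LINT t|lborel. dd (rep (L2cls n f1)) (rep (L2cls n f2)) t i * dd (rep (L2cls n g1)) (rep (L2cls n g2)) t i)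
      = (LINT t|lborel. dd f1 f2 t i * dd g1 g2 t i)"
  proof (rule integral_cong_AE)
    show "(\<lambda>t. dd (rep (L2cls n f1)) (rep (L2cls n f2)) t i * dd (rep (L2cls n g1)) (rep (L2cls n g2)) t i) \<in> borel_measurable lborel"
      unfolding dd_def
      by (intro borel_measurable_times borel_measurable_diff m s assms)
    show "(\<lambda>t. dd f1 f2 t i * dd g1 g2 t i) \<in> borel_measurable lborel"
      unfolding dd_def
      by (intro borel_measurable_times borel_measurable_diff m assms)
    show "AE t in lborel. dd (rep (L2cls n f1)) (rep (L2cls n f2)) t i * dd (rep (L2cls n g1)) (rep (L2cls n g2)) t i
        = dd f1 f2 t i * dd g1 g2 t i"
      using ae[OF assms(1)] ae[OF assms(2)] ae[OF assms(3)] ae[OF assms(4)]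
      by eventually_elim (simp add: dd_def)
  qed
qed



lemma ip_FF: "ip_diff 1 (L2cls 1 (FF a b)) (L2cls 1 (FF c d)) (L2cls 1 (FF a' b')) (L2cls 1 (FF c' d'))
   = (a - c) * (a' - c') + (b - d) * (b' - d')"
  unfolding ip_cls[OF FF_sig FF_sig FF_sig FF_sig] by (rule PP_FF)

lemma SRG_wit:
  assumes z: "z \<in> D1 \<mu> \<union> D2 \<epsilon> \<gamma>" and mu: "\<mu> > 0"
  shows "Some z \<in> SRG_S \<epsilon> \<mu> \<gamma>"
proof -
  define x where "x = Re z"
  define y where "y = Im z"
  define U0 where "U0 = L2cls 1 (FF 0 0)"
  define U1 where "U1 = L2cls 1 (FF 1 0)"
  define Yg where "Yg = L2cls 1 (FF x \<bar>y\<bar>)"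
  have L0: "U0 \<in> L2 1" unfolding U0_def by (rule sig_L2[OF FF_sig])
  have L1: "U1 \<in> L2 1" unfolding U1_def by (rule sig_L2[OF FF_sig])
  have LY: "Yg \<in> L2 1" unfolding Yg_def by (rule sig_L2[OF FF_sig])
  have uu: "ip_diff 1 U1 U0 U1 U0 = 1" unfolding U0_def U1_def ip_FF by simp
  have nu: "nrm_diff 1 U1 U0 = 1" unfolding nrm_diff_def uu by simp
  have ne: "U1 \<noteq> U0"
  proof
    assume "U1 = U0"
    then have "ip_diff 1 U1 U0 U1 U0 = 0" by (simp add: ip_self1)
    with uu show False by simp
  qed
  have cc: "ip_diff 1 U1 U0 Yg U0 = x" unfolding U0_def U1_def Yg_def ip_FF by simp
  have yy: "ip_diff 1 Yg U0 Yg U0 = x\<^sup>2 + y\<^sup>2" unfolding U0_def Yg_def ip_FF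
    by (simp add: power2_eq_square)
  have b: "nrm_diff 1 Yg U0 = cmod z" unfolding nrm_diff_def yy x_def y_def cmod_def ..
  define s where "s = (if y \<ge> 0 then 1 else -1::real)"
  have s1: "s \<in> {1, -1}" unfolding s_def by auto
  have zv: "zval 1 U1 U0 Yg U0 s = z"
  proof (cases "Yg = U0")
    case True
    then have "cmod z = 0" using b nrm_self by metis
    then show ?thesis using True unfolding zval_def by simp
  next
    case False
    define r where "r = cmod z"
    have rp: "r > 0" using nrm_pos[OF LY L0 False] b r_def by simp
    have ang: "angle_diff 1 U1 U0 Yg U0 = arccos (x / r)"
      unfolding angle_diff_def cc nu b r_def by simp
    have zz: "zval 1 U1 U0 Yg U0 s = complex_of_real r * cis (s * arccos (x / r))"
      unfolding zval_def using False ang nu b r_def by simp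
    have xr: "\<bar>x\<bar> \<le> r" unfolding x_def r_def by (rule abs_Re_le_cmod)
    have bd: "-1 \<le> x / r" "x / r \<le> 1" using xr rp by (auto simp: divide_le_eq le_divide_eq abs_le_iff)
    have r2: "r\<^sup>2 = x\<^sup>2 + y\<^sup>2" unfolding r_def x_def y_def by (rule cmod_power2)
    have "(\<bar>y\<bar> / r)\<^sup>2 = y\<^sup>2 / r\<^sup>2" by (simp add: power_divide)
    also have "\<dots> = (r\<^sup>2 - x\<^sup>2) / r\<^sup>2" using r2 by simp
    also have "\<dots> = 1 - (x / r)\<^sup>2" using rp by (simp add: diff_divide_distrib power_divide)
    finally have "1 - (x / r)\<^sup>2 = (\<bar>y\<bar> / r)\<^sup>2" by simp
    then have sn: "sin (arccos (x / r)) = \<bar>y\<bar> / r"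
      using sin_arccos[OF bd] rp by simp
    have cs: "cos (arccos (x / r)) = x / r" using bd by simp
    have re: "Re (complex_of_real r * cis (s * arccos (x / r))) = x"
      using s1 cs rp by auto
    have im: "Im (complex_of_real r * cis (s * arccos (x / r))) = y"
      using s1 sn rp unfolding s_def by (auto split: if_splits)
    show ?thesis unfolding zz by (rule complex_eqI) (use re im x_def y_def in auto)
  qed
  define H where "H = {(U0, U0), (U1, Yg)}"
  have c10: "cond 1 \<epsilon> \<mu> \<gamma> U1 U0 Yg U0"
    using pair_equiv[OF L1 L0 LY L0 mu ne s1, of \<epsilon> \<gamma>] zv z by simp
  have c01: "cond 1 \<epsilon> \<mu> \<gamma> U0 U1 U0 Yg" using c10 cond_sym by metis
  have cs: "\<And>u y. y \<in> L2 1 \<Longrightarrow> cond 1 \<epsilon> \<mu> \<gamma> u u y y" using cond_same by metis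
  have HS: "H \<in> S_class 1 \<epsilon> \<mu> \<gamma>"
    unfolding S_class_def sid_cond is_op_def
  proof (intro CollectI conjI allI impI)
    show "H \<subseteq> L2 1 \<times> L2 1" unfolding H_def using L0 L1 LY by auto
    fix u1 y1 u2 y2 assume "(u1, y1) \<in> H" "(u2, y2) \<in> H"
    then show "cond 1 \<epsilon> \<mu> \<gamma> u1 u2 y1 y2"
      unfolding H_def using c10 c01 cs L0 LY by auto
  qed
  have "Some z \<in> zH 1 H U1 U0"
    unfolding zH_ne[OF ne] H_def using zv s1 by blast
  then have "Some z \<in> SRG 1 H" unfolding SRG_def using L0 L1 by blast
  then show ?thesis unfolding SRG_S_def using HS by force
qed

theorem lemma1:
  fixes \<epsilon> \<mu> \<gamma> :: real
  assumes "\<mu> > 0" and "\<gamma> > 0" and "\<epsilon> \<ge> 0"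
  shows "SRG_S \<epsilon> \<mu> \<gamma> = Some ` (D1 \<mu> \<union> D2 \<epsilon> \<gamma>)
    \<and> (\<forall>n \<ge> 1. \<forall>H. is_op n H \<longrightarrow>
          (H \<in> S_class n \<epsilon> \<mu> \<gamma> \<longleftrightarrow> SRG n H \<subseteq> SRG_S \<epsilon> \<mu> \<gamma>))"
proof -
  have eq: "SRG_S \<epsilon> \<mu> \<gamma> = Some ` (D1 \<mu> \<union> D2 \<epsilon> \<gamma>)"
  proof
    show "SRG_S \<epsilon> \<mu> \<gamma> \<subseteq> Some ` (D1 \<mu> \<union> D2 \<epsilon> \<gamma>)"
      unfolding SRG_S_def using SRG_sub[OF _ assms(1)] by blast
    show "Some ` (D1 \<mu> \<union> D2 \<epsilon> \<gamma>) \<subseteq> SRG_S \<epsilon> \<mu> \<gamma>"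
      using SRG_wit[OF _ assms(1)] by blast
  qed
  show ?thesis
    unfolding eq using SRG_sub[OF _ assms(1)] SRG_full[OF _ _ assms(1)] by blast
qed


end
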